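(* Let $G\in\mathfrak D_4$ and let $\Upsilon\subseteq G$ be a subgraph isomorphic to the Mycielski–Grötzsch graph with vertices labelled $a_j,b_j$ ($j\in\mathbb Z/5\mathbb Z$), $c$. Then at least one of $a_1,a_2,a_3$ is reliable; that is, there exists $i\in\{1,2,3\}$ such that no vertex of $G$ is adjacent to all three of $a_{i-1},a_{i+1},b_i$.
   Context: $\mathfrak D_4$ is the class of (finite) maximal triangle-free graphs satisfying property $\mathscr{D}_4$ (for every $m\in\{1,2,3,4\}$ and every sequence $x_1,\dots,x_{3m}$ of not necessarily distinct vertices there is a vertex $y$ with $|\{i: x_iy\in E(G)\}|\ge m+1$). Maximal triangle-free: no triangle, and adding any new edge creates a triangle. Mycielski–Grötzsch graph: vertices $a_j,b_j$ ($j\in\mathbb Z/5\mathbb Z$), $c$; edges all pairs $a_jc$, $a_jb_{j\pm2}$, $b_jb_{j+2}$. *)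

theory Defs
  imports Main
begin

definition finite_graph :: "'a set \<Rightarrow> ('a \<Rightarrow> 'a \<Rightarrow> bool) \<Rightarrow> bool" where
  "finite_graph V E \<longleftrightarrow> finite V \<and> (\<forall>x y. E x y \<longrightarrow> x \<in> V \<and> y \<in> V)
     \<and> (\<forall>x y. E x y \<longrightarrow> E y x) \<and> (\<forall>x. \<not> E x x)"

definition triangle_free :: "'a set \<Rightarrow> ('a \<Rightarrow> 'a \<Rightarrow> bool) \<Rightarrow> bool" where
  "triangle_free V E \<longleftrightarrow> (\<forall>x\<in>V. \<forall>y\<in>V. \<forall>z\<in>V. \<not> (E x y \<and> E y z \<and> E x z))"

definition maximal_triangle_free :: "'a set \<Rightarrow> ('a \<Rightarrow> 'a \<Rightarrow> bool) \<Rightarrow> bool" where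
  "maximal_triangle_free V E \<longleftrightarrow> finite_graph V E \<and> triangle_free V E \<and>
     (\<forall>u\<in>V. \<forall>v\<in>V. u \<noteq> v \<and> \<not> E u v \<longrightarrow> (\<exists>w\<in>V. E u w \<and> E w v))"

definition prop_D4 :: "'a set \<Rightarrow> ('a \<Rightarrow> 'a \<Rightarrow> bool) \<Rightarrow> bool" where
  "prop_D4 V E \<longleftrightarrow> (\<forall>m::nat. 1 \<le> m \<and> m \<le> 4 \<longrightarrow>
     (\<forall>x::nat \<Rightarrow> 'a. (\<forall>i<3*m. x i \<in> V) \<longrightarrow>
        (\<exists>y\<in>V. card {i. i < 3*m \<and> E (x i) y} \<ge> m + 1)))"

definition in_D4 :: "'a set \<Rightarrow> ('a \<Rightarrow> 'a \<Rightarrow> bool) \<Rightarrow> bool" where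
  "in_D4 V E \<longleftrightarrow> maximal_triangle_free V E \<and> prop_D4 V E"

text \<open>A subgraph of (V,E) isomorphic to the Mycielski--Groetzsch graph, with vertices
a j, b j (j in Z/5Z, represented by 0..4, indices read mod 5) and c: the 11 vertices
are distinct vertices of V and every edge of the Mycielski--Groetzsch graph is an edge of E.\<close>
definition MG_subgraph :: "'a set \<Rightarrow> ('a \<Rightarrow> 'a \<Rightarrow> bool) \<Rightarrow> (nat \<Rightarrow> 'a) \<Rightarrow> (nat \<Rightarrow> 'a) \<Rightarrow> 'a \<Rightarrow> bool" where
  "MG_subgraph V E a b c \<longleftrightarrow>
     inj_on a {0..<5} \<and> inj_on b {0..<5} \<and> a ` {0..<5} \<inter> b ` {0..<5} = {} \<and>
     c \<notin> a ` {0..<5} \<and> c \<notin> b ` {0..<5} \<and>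
     a ` {0..<5} \<subseteq> V \<and> b ` {0..<5} \<subseteq> V \<and> c \<in> V \<and>
     (\<forall>j<5. E (a j) c \<and> E (a j) (b ((j + 2) mod 5)) \<and> E (a j) (b ((j + 3) mod 5))
        \<and> E (b j) (b ((j + 2) mod 5)))"

end

theory Submission
  imports Defs
begin

lemma card_sum_list:
  "card {i. i < length xs \<and> P (xs ! i)} = (\<Sum>x\<leftarrow>xs. if P x then 1 else 0)"
proof -
  have "card {i. i < length xs \<and> P (xs ! i)} = (\<Sum>i\<in>{0..<length xs}. if P (xs ! i) then 1 else 0)"
    by (simp add: sum.If_cases Int_def atLeast0LessThan conj_commute)
  also have "\<dots> = (\<Sum>x\<leftarrow>xs. if P x then 1 else 0)"
    by (simp add: sum_list_sum_nth)
  finally show ?thesis .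
qed

lemma D4_list:
  assumes "prop_D4 V E" "set xs \<subseteq> V" "length xs = 3*m" "1\<le>m" "m\<le>4"
  shows "\<exists>y\<in>V. (\<Sum>x\<leftarrow>xs. if E x y then 1 else 0) \<ge> m+1"
proof -
  have "\<forall>i<3*m. (\<lambda>i. xs ! i) i \<in> V" using assms(2,3) by auto
  then obtain y where "y\<in>V" "card {i. i < 3*m \<and> E (xs ! i) y} \<ge> m+1"
    using assms(1,4,5) unfolding prop_D4_def by blast
  then show ?thesis using card_sum_list[of xs "\<lambda>x. E x y"] assms(3) by auto
qed

lemma cyc2: "\<not> (p0 \<and> p1) \<Longrightarrow> \<not> (p1 \<and> p0) \<Longrightarrow> (if p0 then 1 else 0) + (if p1 then 1 else 0) \<le> (1::nat)"
  by (cases p0; cases p1; simp)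

lemma cyc5: "\<not> (p0 \<and> p1) \<Longrightarrow> \<not> (p1 \<and> p2) \<Longrightarrow> \<not> (p2 \<and> p3) \<Longrightarrow> \<not> (p3 \<and> p4) \<Longrightarrow> \<not> (p4 \<and> p0) \<Longrightarrow> (if p0 then 1 else 0) + (if p1 then 1 else 0) + (if p2 then 1 else 0) + (if p3 then 1 else 0) + (if p4 then 1 else 0) \<le> (2::nat)"
  by (cases p0; cases p1; cases p2; cases p3; cases p4; simp)

lemma cyc7: "\<not> (p0 \<and> p1) \<Longrightarrow> \<not> (p1 \<and> p2) \<Longrightarrow> \<not> (p2 \<and> p3) \<Longrightarrow> \<not> (p3 \<and> p4) \<Longrightarrow> \<not> (p4 \<and> p5) \<Longrightarrow> \<not> (p5 \<and> p6) \<Longrightarrow> \<not> (p6 \<and> p0) \<Longrightarrow> (if p0 then 1 else 0) + (if p1 then 1 else 0) + (if p2 then 1 else 0) + (if p3 then 1 else 0) + (if p4 then 1 else 0) + (if p5 then 1 else 0) + (if p6 then 1 else 0) \<le> (3::nat)"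
  by (cases p0; cases p1; cases p2; cases p3; cases p4; cases p5; cases p6; simp)

lemma cyc9: "\<not> (p0 \<and> p1) \<Longrightarrow> \<not> (p1 \<and> p2) \<Longrightarrow> \<not> (p2 \<and> p3) \<Longrightarrow> \<not> (p3 \<and> p4) \<Longrightarrow> \<not> (p4 \<and> p5) \<Longrightarrow> \<not> (p5 \<and> p6) \<Longrightarrow> \<not> (p6 \<and> p7) \<Longrightarrow> \<not> (p7 \<and> p8) \<Longrightarrow> \<not> (p8 \<and> p0) \<Longrightarrow> (if p0 then 1 else 0) + (if p1 then 1 else 0) + (if p2 then 1 else 0) + (if p3 then 1 else 0) + (if p4 then 1 else 0) + (if p5 then 1 else 0) + (if p6 then 1 else 0) + (if p7 then 1 else 0) + (if p8 then 1 else 0) \<le> (4::nat)"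
  by (cases p0; cases p1; cases p2; cases p3; cases p4; cases p5; cases p6; cases p7; cases p8; simp)

lemma step1: "(3::nat) + 1 \<le> (if p0 then 1 else 0) + ((if p1 then 1 else 0) + ((if p2 then 1 else 0) + ((if p3 then 1 else 0) + ((if p4 then 1 else 0) + ((if p5 then 1 else 0) + ((if p6 then 1 else 0) + ((if p7 then 1 else 0) + ((if p8 then 1 else 0) + (0))))))))) \<Longrightarrow> \<not> (p0 \<and> p4) \<Longrightarrow> \<not> (p0 \<and> p5) \<Longrightarrow> \<not> (p0 \<and> p6) \<Longrightarrow> \<not> (p1 \<and> p6) \<Longrightarrow> \<not> (p1 \<and> p8) \<Longrightarrow> \<not> (p2 \<and> p3) \<Longrightarrow> \<not> (p2 \<and> p4) \<Longrightarrow> \<not> (p2 \<and> p8) \<Longrightarrow> \<not> (p3 \<and> p5) \<Longrightarrow> \<not> (p3 \<and> p6) \<Longrightarrow> \<not> (p4 \<and> p7) \<Longrightarrow> \<not> (p5 \<and> p8) \<Longrightarrow> (p2 \<and> p5 \<and> p7) \<or> (p0 \<and> p3 \<and> p7 \<and> p8) \<or> (p0 \<and> p1 \<and> p7)"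
  by (cases p0; cases p1; cases p2; cases p3; cases p4; cases p5; cases p6; cases p7; cases p8; simp)

lemma fin0:
  assumes t: "(4::nat) + 1 \<le> x0 + (x1 + (x2 + (x3 + (x4 + (x5 + (x6 + (x7 + (x8 + (x9 + (x10 + (x11 + (0))))))))))))"
    and h0: "x10 + x11 \<le> 1"
    and h1: "x2 + x4 + x6 + x3 + x8 \<le> 2"
    and h2: "x2 + x4 + x7 + x11 + x10 \<le> 2"
    and h3: "x1 + x4 + x6 + x10 + x2 + x5 + x9 \<le> 3"
    and h4: "x0 + x6 + x10 + x11 + x7 \<le> 2"
    and h5: "x0 + x8 + x3 + x6 + x4 + x1 + x9 \<le> 3"
    and h6: "x0 + x7 + x4 + x1 + x8 \<le> 2"
    and h7: "x1 + x8 + x2 + x5 + x9 \<le> 2"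
    and h8: "x1 + x8 + x3 + x11 + x7 + x5 + x9 \<le> 3"
    and h9: "x0 + x8 + x3 + x5 + x9 \<le> 2"
    and h10: "x2 + x5 + x3 + x6 + x10 \<le> 2"
    and h11: "x0 + x6 + x3 + x11 + x7 \<le> 2"
  shows False
proof -
  have "5 * (x10 + x11) + 1 * (x2 + x4 + x6 + x3 + x8) + 6 * (x2 + x4 + x7 + x11 + x10) + 6 * (x1 + x4 + x6 + x10 + x2 + x5 + x9) + 1 * (x0 + x6 + x10 + x11 + x7) + 3 * (x0 + x8 + x3 + x6 + x4 + x1 + x9) + 5 * (x0 + x7 + x4 + x1 + x8) + 5 * (x1 + x8 + x2 + x5 + x9) + 2 * (x1 + x8 + x3 + x11 + x7 + x5 + x9) + 5 * (x0 + x8 + x3 + x5 + x9) + 3 * (x2 + x5 + x3 + x6 + x10) + 7 * (x0 + x6 + x3 + x11 + x7) \<le> 5 * 1 + 1 * 2 + 6 * 2 + 6 * 3 + 1 * 2 + 3 * 3 + 5 * 2 + 5 * 2 + 2 * 3 + 5 * 2 + 3 * 2 + 7 * 2"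
    by (intro add_mono mult_le_mono2 h0 h1 h2 h3 h4 h5 h6 h7 h8 h9 h10 h11)
  then show False using t unfolding distrib_left mult_1 by linarith
qed

lemma fin1:
  assumes t: "(4::nat) + 1 \<le> x0 + (x1 + (x2 + (x3 + (x4 + (x5 + (x6 + (x7 + (x8 + (x9 + (x10 + (x11 + (0))))))))))))"
    and h0: "x0 + x5 + x7 + x2 + x8 \<le> 2"
    and h1: "x1 + x7 + x4 + x11 + x9 \<le> 2"
    and h2: "x0 + x6 + x10 + x3 + x8 \<le> 2"
    and h3: "x0 + x8 + x2 + x10 + x3 + x4 + x11 \<le> 3"
    and h4: "x2 + x7 + x5 + x3 + x10 \<le> 2"
    and h5: "x1 + x6 + x4 + x11 + x9 \<le> 2"
    and h6: "x0 + x5 + x9 + x1 + x8 \<le> 2"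
  shows False
proof -
  have "2 * (x0 + x5 + x7 + x2 + x8) + 1 * (x1 + x7 + x4 + x11 + x9) + 2 * (x0 + x6 + x10 + x3 + x8) + 1 * (x0 + x8 + x2 + x10 + x3 + x4 + x11) + 3 * (x2 + x7 + x5 + x3 + x10) + 4 * (x1 + x6 + x4 + x11 + x9) + 1 * (x0 + x5 + x9 + x1 + x8) \<le> 2 * 2 + 1 * 2 + 2 * 2 + 1 * 3 + 3 * 2 + 4 * 2 + 1 * 2"
    by (intro add_mono mult_le_mono2 h0 h1 h2 h3 h4 h5 h6)
  then show False using t unfolding distrib_left mult_1 by linarith
qed

lemma fin2:
  assumes t: "(4::nat) + 1 \<le> x0 + (x1 + (x2 + (x3 + (x4 + (x5 + (x6 + (x7 + (x8 + (x9 + (x10 + (x11 + (0))))))))))))"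
    and h0: "x2 + x8 + x5 + x3 + x9 \<le> 2"
    and h1: "x1 + x7 + x5 + x3 + x9 \<le> 2"
    and h2: "x0 + x9 + x1 + x10 + x11 \<le> 2"
    and h3: "x1 + x8 + x2 + x11 + x10 \<le> 2"
    and h4: "x2 + x4 + x7 + x5 + x8 \<le> 2"
    and h5: "x0 + x6 + x4 + x3 + x9 \<le> 2"
    and h6: "x0 + x6 + x8 + x2 + x11 \<le> 2"
    and h7: "x4 + x6 \<le> 1"
    and h8: "x0 + x9 + x3 + x10 + x11 \<le> 2"
    and h9: "x1 + x7 + x4 + x6 + x10 \<le> 2"
    and h10: "x3 + x5 \<le> 1"
  shows False
proof -
  have "1 * (x2 + x8 + x5 + x3 + x9) + 2 * (x1 + x7 + x5 + x3 + x9) + 2 * (x0 + x9 + x1 + x10 + x11) + 1 * (x1 + x8 + x2 + x11 + x10) + 3 * (x2 + x4 + x7 + x5 + x8) + 1 * (x0 + x6 + x4 + x3 + x9) + 3 * (x0 + x6 + x8 + x2 + x11) + 1 * (x4 + x6) + 2 * (x0 + x9 + x3 + x10 + x11) + 3 * (x1 + x7 + x4 + x6 + x10) + 2 * (x3 + x5) \<le> 1 * 2 + 2 * 2 + 2 * 2 + 1 * 2 + 3 * 2 + 1 * 2 + 3 * 2 + 1 * 1 + 2 * 2 + 3 * 2 + 2 * 1"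
    by (intro add_mono mult_le_mono2 h0 h1 h2 h3 h4 h5 h6 h7 h8 h9 h10)
  then show False using t unfolding distrib_left mult_1 by linarith
qed

theorem mainTheorem15:
  fixes V :: "'v set" and E :: "'v \<Rightarrow> 'v \<Rightarrow> bool"
    and a b :: "nat \<Rightarrow> 'v" and c :: 'v
  assumes "in_D4 V E"
    and "MG_subgraph V E a b c"
  shows "\<exists>i\<in>{1,2,3::nat}. \<not> (\<exists>y\<in>V. E y (a (i - 1)) \<and> E y (a (i + 1)) \<and> E y (b i))"
proof (rule ccontr)
  assume neg: "\<not> ?thesis"
  have fg: "finite_graph V E" and tf: "triangle_free V E" and D4: "prop_D4 V E"
    using assms(1) unfolding in_D4_def maximal_triangle_free_def by auto
  have inV: "\<And>u v. E u v \<Longrightarrow> u \<in> V \<and> v \<in> V" using fg unfolding finite_graph_def by blast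
  have sym: "\<And>u v. E u v \<Longrightarrow> E v u" using fg unfolding finite_graph_def by blast
  have notri: "\<And>u v w. E u v \<Longrightarrow> E u w \<Longrightarrow> E v w \<Longrightarrow> False"
  proof -
    fix u v w assume "E u v" "E u w" "E v w"
    then show False using tf inV sym unfolding triangle_free_def by blast
  qed
  have nt: "\<And>u v w. E u v \<Longrightarrow> \<not> (E u w \<and> E v w)" using notri by blast
  have H: "\<forall>j<5. E (a j) c \<and> E (a j) (b ((j + 2) mod 5)) \<and> E (a j) (b ((j + 3) mod 5))
        \<and> E (b j) (b ((j + 2) mod 5))"
    using assms(2) unfolding MG_subgraph_def by blast
  have lt0: "(0::nat) < 5" and m02: "(0 + 2) mod 5 = (2::nat)" and m03: "(0 + 3) mod 5 = (3::nat)" by simp_all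
  have "E (a 0) c \<and> E (a 0) (b 2) \<and> E (a 0) (b 3) \<and> E (b 0) (b 2)"
    using H[rule_format, of 0, unfolded m02 m03] lt0 by blast
  then have e_a0_c: "E (a 0) c" and e_a0_b2: "E (a 0) (b 2)" and e_a0_b3: "E (a 0) (b 3)" and e_b0_b2: "E (b 0) (b 2)" by blast+
  have lt1: "(1::nat) < 5" and m12: "(1 + 2) mod 5 = (3::nat)" and m13: "(1 + 3) mod 5 = (4::nat)" by simp_all
  have "E (a 1) c \<and> E (a 1) (b 3) \<and> E (a 1) (b 4) \<and> E (b 1) (b 3)"
    using H[rule_format, of 1, unfolded m12 m13] lt1 by blast
  then have e_a1_c: "E (a 1) c" and e_a1_b3: "E (a 1) (b 3)" and e_a1_b4: "E (a 1) (b 4)" and e_b1_b3: "E (b 1) (b 3)" by blast+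
  have lt2: "(2::nat) < 5" and m22: "(2 + 2) mod 5 = (4::nat)" and m23: "(2 + 3) mod 5 = (0::nat)" by simp_all
  have "E (a 2) c \<and> E (a 2) (b 4) \<and> E (a 2) (b 0) \<and> E (b 2) (b 4)"
    using H[rule_format, of 2, unfolded m22 m23] lt2 by blast
  then have e_a2_c: "E (a 2) c" and e_a2_b4: "E (a 2) (b 4)" and e_a2_b0: "E (a 2) (b 0)" and e_b2_b4: "E (b 2) (b 4)" by blast+
  have lt3: "(3::nat) < 5" and m32: "(3 + 2) mod 5 = (0::nat)" and m33: "(3 + 3) mod 5 = (1::nat)" by simp_all
  have "E (a 3) c \<and> E (a 3) (b 0) \<and> E (a 3) (b 1) \<and> E (b 3) (b 0)"
    using H[rule_format, of 3, unfolded m32 m33] lt3 by blast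
  then have e_a3_c: "E (a 3) c" and e_a3_b0: "E (a 3) (b 0)" and e_a3_b1: "E (a 3) (b 1)" and e_b3_b0: "E (b 3) (b 0)" by blast+
  have lt4: "(4::nat) < 5" and m42: "(4 + 2) mod 5 = (1::nat)" and m43: "(4 + 3) mod 5 = (2::nat)" by simp_all
  have "E (a 4) c \<and> E (a 4) (b 1) \<and> E (a 4) (b 2) \<and> E (b 4) (b 1)"
    using H[rule_format, of 4, unfolded m42 m43] lt4 by blast
  then have e_a4_c: "E (a 4) c" and e_a4_b1: "E (a 4) (b 1)" and e_a4_b2: "E (a 4) (b 2)" and e_b4_b1: "E (b 4) (b 1)" by blast+
  have all: "\<forall>i\<in>{1,2,3::nat}. \<exists>y\<in>V. E y (a (i - 1)) \<and> E y (a (i + 1)) \<and> E y (b i)" using neg by blast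
  have "\<exists>y\<in>V. E y (a 0) \<and> E y (a 2) \<and> E y (b 1)"
    using all[rule_format, of 1] by (simp add: eval_nat_numeral)
  then obtain y1 where y1V: "y1 \<in> V" and e_y1_a0: "E y1 (a 0)" and e_y1_a2: "E y1 (a 2)" and e_y1_b1: "E y1 (b 1)" by blast
  have "\<exists>y\<in>V. E y (a 1) \<and> E y (a 3) \<and> E y (b 2)"
    using all[rule_format, of 2] by (simp add: eval_nat_numeral)
  then obtain y2 where y2V: "y2 \<in> V" and e_y2_a1: "E y2 (a 1)" and e_y2_a3: "E y2 (a 3)" and e_y2_b2: "E y2 (b 2)" by blast
  have "\<exists>y\<in>V. E y (a 2) \<and> E y (a 4) \<and> E y (b 3)"
    using all[rule_format, of 3] by (simp add: eval_nat_numeral)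
  then obtain y3 where y3V: "y3 \<in> V" and e_y3_a2: "E y3 (a 2)" and e_y3_a4: "E y3 (a 4)" and e_y3_b3: "E y3 (b 3)" by blast
  have aV0: "a 0 \<in> V" using inV[OF e_a0_c] by blast
  have bV0: "b 2 \<in> V" using inV[OF e_a0_b2] by blast
  have aV1: "a 1 \<in> V" using inV[OF e_a1_c] by blast
  have bV1: "b 3 \<in> V" using inV[OF e_a1_b3] by blast
  have aV2: "a 2 \<in> V" using inV[OF e_a2_c] by blast
  have bV2: "b 4 \<in> V" using inV[OF e_a2_b4] by blast
  have aV3: "a 3 \<in> V" using inV[OF e_a3_c] by blast
  have bV3: "b 0 \<in> V" using inV[OF e_a3_b0] by blast
  have aV4: "a 4 \<in> V" using inV[OF e_a4_c] by blast
  have bV4: "b 1 \<in> V" using inV[OF e_a4_b1] by blast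
  have cV: "c \<in> V" using inV[OF e_a0_c] by blast
  have "set [(a 0), (a 2), (a 4), (b 1), (b 2), (b 3), y1, y2, y3] \<subseteq> V" using aV0 aV1 aV2 aV3 aV4 bV0 bV1 bV2 bV3 bV4 cV y1V y2V y3V by simp
  then have "\<exists>y\<in>V. (3::nat) + 1 \<le> (\<Sum>x\<leftarrow>[(a 0), (a 2), (a 4), (b 1), (b 2), (b 3), y1, y2, y3]. if E x y then 1 else 0)" by (rule D4_list[OF D4]) simp_all
  then obtain z where zV: "z \<in> V" and zc: "(3::nat) + 1 \<le> (\<Sum>x\<leftarrow>[(a 0), (a 2), (a 4), (b 1), (b 2), (b 3), y1, y2, y3]. if E x z then 1 else 0)" by blast
  have cz0: "\<not> (E (a 0) z \<and> E (b 2) z)" using notri[OF e_a0_b2] by blast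
  have cz1: "\<not> (E (a 0) z \<and> E (b 3) z)" using notri[OF e_a0_b3] by blast
  have cz2: "\<not> (E (a 0) z \<and> E y1 z)" using notri[OF e_y1_a0] by blast
  have cz3: "\<not> (E (a 2) z \<and> E y1 z)" using notri[OF e_y1_a2] by blast
  have cz4: "\<not> (E (a 2) z \<and> E y3 z)" using notri[OF e_y3_a2] by blast
  have cz5: "\<not> (E (a 4) z \<and> E (b 1) z)" using notri[OF e_a4_b1] by blast
  have cz6: "\<not> (E (a 4) z \<and> E (b 2) z)" using notri[OF e_a4_b2] by blast
  have cz7: "\<not> (E (a 4) z \<and> E y3 z)" using notri[OF e_y3_a4] by blast
  have cz8: "\<not> (E (b 1) z \<and> E (b 3) z)" using notri[OF e_b1_b3] by blast
  have cz9: "\<not> (E (b 1) z \<and> E y1 z)" using notri[OF e_y1_b1] by blast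
  have cz10: "\<not> (E (b 2) z \<and> E y2 z)" using notri[OF e_y2_b2] by blast
  have cz11: "\<not> (E (b 3) z \<and> E y3 z)" using notri[OF e_y3_b3] by blast
  have cases: "(E (a 4) z \<and> E (b 3) z \<and> E y2 z) \<or> (E (a 0) z \<and> E (b 1) z \<and> E y2 z \<and> E y3 z) \<or> (E (a 0) z \<and> E (a 2) z \<and> E y2 z)"
    by (rule step1[OF zc[unfolded list.map sum_list.Cons sum_list.Nil] cz0 cz1 cz2 cz3 cz4 cz5 cz6 cz7 cz8 cz9 cz10 cz11])
  show False
  proof -
    {
      assume cs: "E (a 4) z \<and> E (b 3) z \<and> E y2 z"
      then have e_z_a4: "E z (a 4)" and e_z_b3: "E z (b 3)" and e_z_y2: "E z y2" using sym by auto
      have "set [(a 0), (a 2), (a 3), (a 4), (b 0), (b 1), (b 2), (b 3), c, y1, y2, z] \<subseteq> V" using aV0 aV1 aV2 aV3 aV4 bV0 bV1 bV2 bV3 bV4 cV y1V y2V y3V zV by simp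
      then have "\<exists>y\<in>V. (4::nat) + 1 \<le> (\<Sum>x\<leftarrow>[(a 0), (a 2), (a 3), (a 4), (b 0), (b 1), (b 2), (b 3), c, y1, y2, z]. if E x y then 1 else 0)" by (rule D4_list[OF D4]) simp_all
      then obtain w where wc: "(4::nat) + 1 \<le> (\<Sum>x\<leftarrow>[(a 0), (a 2), (a 3), (a 4), (b 0), (b 1), (b 2), (b 3), c, y1, y2, z]. if E x w then 1 else 0)" by blast
      have cyc0_0: "(if E y2 w then 1 else 0) + (if E z w then 1 else 0) \<le> (1::nat)"
        by (rule cyc2[OF nt[OF sym[OF e_z_y2]] nt[OF e_z_y2]])
      have cyc0_1: "(if E (a 3) w then 1 else 0) + (if E (b 0) w then 1 else 0) + (if E (b 2) w then 1 else 0) + (if E (a 4) w then 1 else 0) + (if E c w then 1 else 0) \<le> (2::nat)"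
        by (rule cyc5[OF nt[OF e_a3_b0] nt[OF e_b0_b2] nt[OF sym[OF e_a4_b2]] nt[OF e_a4_c] nt[OF sym[OF e_a3_c]]])
      have cyc0_2: "(if E (a 3) w then 1 else 0) + (if E (b 0) w then 1 else 0) + (if E (b 3) w then 1 else 0) + (if E z w then 1 else 0) + (if E y2 w then 1 else 0) \<le> (2::nat)"
        by (rule cyc5[OF nt[OF e_a3_b0] nt[OF sym[OF e_b3_b0]] nt[OF sym[OF e_z_b3]] nt[OF e_z_y2] nt[OF e_y2_a3]])
      have cyc0_3: "(if E (a 2) w then 1 else 0) + (if E (b 0) w then 1 else 0) + (if E (b 2) w then 1 else 0) + (if E y2 w then 1 else 0) + (if E (a 3) w then 1 else 0) + (if E (b 1) w then 1 else 0) + (if E y1 w then 1 else 0) \<le> (3::nat)"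
        by (rule cyc7[OF nt[OF e_a2_b0] nt[OF e_b0_b2] nt[OF sym[OF e_y2_b2]] nt[OF e_y2_a3] nt[OF e_a3_b1] nt[OF sym[OF e_y1_b1]] nt[OF e_y1_a2]])
      have cyc0_4: "(if E (a 0) w then 1 else 0) + (if E (b 2) w then 1 else 0) + (if E y2 w then 1 else 0) + (if E z w then 1 else 0) + (if E (b 3) w then 1 else 0) \<le> (2::nat)"
        by (rule cyc5[OF nt[OF e_a0_b2] nt[OF sym[OF e_y2_b2]] nt[OF sym[OF e_z_y2]] nt[OF e_z_b3] nt[OF sym[OF e_a0_b3]]])
      have cyc0_5: "(if E (a 0) w then 1 else 0) + (if E c w then 1 else 0) + (if E (a 4) w then 1 else 0) + (if E (b 2) w then 1 else 0) + (if E (b 0) w then 1 else 0) + (if E (a 2) w then 1 else 0) + (if E y1 w then 1 else 0) \<le> (3::nat)"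
        by (rule cyc7[OF nt[OF e_a0_c] nt[OF sym[OF e_a4_c]] nt[OF e_a4_b2] nt[OF sym[OF e_b0_b2]] nt[OF sym[OF e_a2_b0]] nt[OF sym[OF e_y1_a2]] nt[OF e_y1_a0]])
      have cyc0_6: "(if E (a 0) w then 1 else 0) + (if E (b 3) w then 1 else 0) + (if E (b 0) w then 1 else 0) + (if E (a 2) w then 1 else 0) + (if E c w then 1 else 0) \<le> (2::nat)"
        by (rule cyc5[OF nt[OF e_a0_b3] nt[OF e_b3_b0] nt[OF sym[OF e_a2_b0]] nt[OF e_a2_c] nt[OF sym[OF e_a0_c]]])
      have cyc0_7: "(if E (a 2) w then 1 else 0) + (if E c w then 1 else 0) + (if E (a 3) w then 1 else 0) + (if E (b 1) w then 1 else 0) + (if E y1 w then 1 else 0) \<le> (2::nat)"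
        by (rule cyc5[OF nt[OF e_a2_c] nt[OF sym[OF e_a3_c]] nt[OF e_a3_b1] nt[OF sym[OF e_y1_b1]] nt[OF e_y1_a2]])
      have cyc0_8: "(if E (a 2) w then 1 else 0) + (if E c w then 1 else 0) + (if E (a 4) w then 1 else 0) + (if E z w then 1 else 0) + (if E (b 3) w then 1 else 0) + (if E (b 1) w then 1 else 0) + (if E y1 w then 1 else 0) \<le> (3::nat)"
        by (rule cyc7[OF nt[OF e_a2_c] nt[OF sym[OF e_a4_c]] nt[OF sym[OF e_z_a4]] nt[OF e_z_b3] nt[OF sym[OF e_b1_b3]] nt[OF sym[OF e_y1_b1]] nt[OF e_y1_a2]])
      have cyc0_9: "(if E (a 0) w then 1 else 0) + (if E c w then 1 else 0) + (if E (a 4) w then 1 else 0) + (if E (b 1) w then 1 else 0) + (if E y1 w then 1 else 0) \<le> (2::nat)"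
        by (rule cyc5[OF nt[OF e_a0_c] nt[OF sym[OF e_a4_c]] nt[OF e_a4_b1] nt[OF sym[OF e_y1_b1]] nt[OF e_y1_a0]])
      have cyc0_10: "(if E (a 3) w then 1 else 0) + (if E (b 1) w then 1 else 0) + (if E (a 4) w then 1 else 0) + (if E (b 2) w then 1 else 0) + (if E y2 w then 1 else 0) \<le> (2::nat)"
        by (rule cyc5[OF nt[OF e_a3_b1] nt[OF sym[OF e_a4_b1]] nt[OF e_a4_b2] nt[OF sym[OF e_y2_b2]] nt[OF e_y2_a3]])
      have cyc0_11: "(if E (a 0) w then 1 else 0) + (if E (b 2) w then 1 else 0) + (if E (a 4) w then 1 else 0) + (if E z w then 1 else 0) + (if E (b 3) w then 1 else 0) \<le> (2::nat)"
        by (rule cyc5[OF nt[OF e_a0_b2] nt[OF sym[OF e_a4_b2]] nt[OF sym[OF e_z_a4]] nt[OF e_z_b3] nt[OF sym[OF e_a0_b3]]])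
      have False by (rule fin0[OF wc[unfolded list.map sum_list.Cons sum_list.Nil] cyc0_0 cyc0_1 cyc0_2 cyc0_3 cyc0_4 cyc0_5 cyc0_6 cyc0_7 cyc0_8 cyc0_9 cyc0_10 cyc0_11])
    }
    moreover {
      assume cs: "E (a 0) z \<and> E (b 1) z \<and> E y2 z \<and> E y3 z"
      then have e_z_a0: "E z (a 0)" and e_z_b1: "E z (b 1)" and e_z_y2: "E z y2" and e_z_y3: "E z y3" using sym by auto
      have "set [(a 0), (a 1), (a 2), (a 4), (b 1), (b 2), (b 3), (b 4), c, y2, y3, z] \<subseteq> V" using aV0 aV1 aV2 aV3 aV4 bV0 bV1 bV2 bV3 bV4 cV y1V y2V y3V zV by simp
      then have "\<exists>y\<in>V. (4::nat) + 1 \<le> (\<Sum>x\<leftarrow>[(a 0), (a 1), (a 2), (a 4), (b 1), (b 2), (b 3), (b 4), c, y2, y3, z]. if E x y then 1 else 0)" by (rule D4_list[OF D4]) simp_all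
      then obtain w where wc: "(4::nat) + 1 \<le> (\<Sum>x\<leftarrow>[(a 0), (a 1), (a 2), (a 4), (b 1), (b 2), (b 3), (b 4), c, y2, y3, z]. if E x w then 1 else 0)" by blast
      have cyc1_0: "(if E (a 0) w then 1 else 0) + (if E (b 2) w then 1 else 0) + (if E (b 4) w then 1 else 0) + (if E (a 2) w then 1 else 0) + (if E c w then 1 else 0) \<le> (2::nat)"
        by (rule cyc5[OF nt[OF e_a0_b2] nt[OF e_b2_b4] nt[OF sym[OF e_a2_b4]] nt[OF e_a2_c] nt[OF sym[OF e_a0_c]]])
      have cyc1_1: "(if E (a 1) w then 1 else 0) + (if E (b 4) w then 1 else 0) + (if E (b 1) w then 1 else 0) + (if E z w then 1 else 0) + (if E y2 w then 1 else 0) \<le> (2::nat)"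
        by (rule cyc5[OF nt[OF e_a1_b4] nt[OF e_b4_b1] nt[OF sym[OF e_z_b1]] nt[OF e_z_y2] nt[OF e_y2_a1]])
      have cyc1_2: "(if E (a 0) w then 1 else 0) + (if E (b 3) w then 1 else 0) + (if E y3 w then 1 else 0) + (if E (a 4) w then 1 else 0) + (if E c w then 1 else 0) \<le> (2::nat)"
        by (rule cyc5[OF nt[OF e_a0_b3] nt[OF sym[OF e_y3_b3]] nt[OF e_y3_a4] nt[OF e_a4_c] nt[OF sym[OF e_a0_c]]])
      have cyc1_3: "(if E (a 0) w then 1 else 0) + (if E c w then 1 else 0) + (if E (a 2) w then 1 else 0) + (if E y3 w then 1 else 0) + (if E (a 4) w then 1 else 0) + (if E (b 1) w then 1 else 0) + (if E z w then 1 else 0) \<le> (3::nat)"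
        by (rule cyc7[OF nt[OF e_a0_c] nt[OF sym[OF e_a2_c]] nt[OF sym[OF e_y3_a2]] nt[OF e_y3_a4] nt[OF e_a4_b1] nt[OF sym[OF e_z_b1]] nt[OF e_z_a0]])
      have cyc1_4: "(if E (a 2) w then 1 else 0) + (if E (b 4) w then 1 else 0) + (if E (b 2) w then 1 else 0) + (if E (a 4) w then 1 else 0) + (if E y3 w then 1 else 0) \<le> (2::nat)"
        by (rule cyc5[OF nt[OF e_a2_b4] nt[OF sym[OF e_b2_b4]] nt[OF sym[OF e_a4_b2]] nt[OF sym[OF e_y3_a4]] nt[OF e_y3_a2]])
      have cyc1_5: "(if E (a 1) w then 1 else 0) + (if E (b 3) w then 1 else 0) + (if E (b 1) w then 1 else 0) + (if E z w then 1 else 0) + (if E y2 w then 1 else 0) \<le> (2::nat)"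
        by (rule cyc5[OF nt[OF e_a1_b3] nt[OF sym[OF e_b1_b3]] nt[OF sym[OF e_z_b1]] nt[OF e_z_y2] nt[OF e_y2_a1]])
      have cyc1_6: "(if E (a 0) w then 1 else 0) + (if E (b 2) w then 1 else 0) + (if E y2 w then 1 else 0) + (if E (a 1) w then 1 else 0) + (if E c w then 1 else 0) \<le> (2::nat)"
        by (rule cyc5[OF nt[OF e_a0_b2] nt[OF sym[OF e_y2_b2]] nt[OF e_y2_a1] nt[OF e_a1_c] nt[OF sym[OF e_a0_c]]])
      have False by (rule fin1[OF wc[unfolded list.map sum_list.Cons sum_list.Nil] cyc1_0 cyc1_1 cyc1_2 cyc1_3 cyc1_4 cyc1_5 cyc1_6])
    }
    moreover {
      assume cs: "E (a 0) z \<and> E (a 2) z \<and> E y2 z"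
      then have e_z_a0: "E z (a 0)" and e_z_a2: "E z (a 2)" and e_z_y2: "E z y2" using sym by auto
      have "set [(a 0), (a 1), (a 2), (a 3), (b 0), (b 1), (b 2), (b 3), (b 4), c, y2, z] \<subseteq> V" using aV0 aV1 aV2 aV3 aV4 bV0 bV1 bV2 bV3 bV4 cV y1V y2V y3V zV by simp
      then have "\<exists>y\<in>V. (4::nat) + 1 \<le> (\<Sum>x\<leftarrow>[(a 0), (a 1), (a 2), (a 3), (b 0), (b 1), (b 2), (b 3), (b 4), c, y2, z]. if E x y then 1 else 0)" by (rule D4_list[OF D4]) simp_all
      then obtain w where wc: "(4::nat) + 1 \<le> (\<Sum>x\<leftarrow>[(a 0), (a 1), (a 2), (a 3), (b 0), (b 1), (b 2), (b 3), (b 4), c, y2, z]. if E x w then 1 else 0)" by blast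
      have cyc2_0: "(if E (a 2) w then 1 else 0) + (if E (b 4) w then 1 else 0) + (if E (b 1) w then 1 else 0) + (if E (a 3) w then 1 else 0) + (if E c w then 1 else 0) \<le> (2::nat)"
        by (rule cyc5[OF nt[OF e_a2_b4] nt[OF e_b4_b1] nt[OF sym[OF e_a3_b1]] nt[OF e_a3_c] nt[OF sym[OF e_a2_c]]])
      have cyc2_1: "(if E (a 1) w then 1 else 0) + (if E (b 3) w then 1 else 0) + (if E (b 1) w then 1 else 0) + (if E (a 3) w then 1 else 0) + (if E c w then 1 else 0) \<le> (2::nat)"
        by (rule cyc5[OF nt[OF e_a1_b3] nt[OF sym[OF e_b1_b3]] nt[OF sym[OF e_a3_b1]] nt[OF e_a3_c] nt[OF sym[OF e_a1_c]]])
      have cyc2_2: "(if E (a 0) w then 1 else 0) + (if E c w then 1 else 0) + (if E (a 1) w then 1 else 0) + (if E y2 w then 1 else 0) + (if E z w then 1 else 0) \<le> (2::nat)"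
        by (rule cyc5[OF nt[OF e_a0_c] nt[OF sym[OF e_a1_c]] nt[OF sym[OF e_y2_a1]] nt[OF sym[OF e_z_y2]] nt[OF e_z_a0]])
      have cyc2_3: "(if E (a 1) w then 1 else 0) + (if E (b 4) w then 1 else 0) + (if E (a 2) w then 1 else 0) + (if E z w then 1 else 0) + (if E y2 w then 1 else 0) \<le> (2::nat)"
        by (rule cyc5[OF nt[OF e_a1_b4] nt[OF sym[OF e_a2_b4]] nt[OF sym[OF e_z_a2]] nt[OF e_z_y2] nt[OF e_y2_a1]])
      have cyc2_4: "(if E (a 2) w then 1 else 0) + (if E (b 0) w then 1 else 0) + (if E (b 3) w then 1 else 0) + (if E (b 1) w then 1 else 0) + (if E (b 4) w then 1 else 0) \<le> (2::nat)"
        by (rule cyc5[OF nt[OF e_a2_b0] nt[OF sym[OF e_b3_b0]] nt[OF sym[OF e_b1_b3]] nt[OF sym[OF e_b4_b1]] nt[OF sym[OF e_a2_b4]]])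
      have cyc2_5: "(if E (a 0) w then 1 else 0) + (if E (b 2) w then 1 else 0) + (if E (b 0) w then 1 else 0) + (if E (a 3) w then 1 else 0) + (if E c w then 1 else 0) \<le> (2::nat)"
        by (rule cyc5[OF nt[OF e_a0_b2] nt[OF sym[OF e_b0_b2]] nt[OF sym[OF e_a3_b0]] nt[OF e_a3_c] nt[OF sym[OF e_a0_c]]])
      have cyc2_6: "(if E (a 0) w then 1 else 0) + (if E (b 2) w then 1 else 0) + (if E (b 4) w then 1 else 0) + (if E (a 2) w then 1 else 0) + (if E z w then 1 else 0) \<le> (2::nat)"
        by (rule cyc5[OF nt[OF e_a0_b2] nt[OF e_b2_b4] nt[OF sym[OF e_a2_b4]] nt[OF sym[OF e_z_a2]] nt[OF e_z_a0]])
      have cyc2_7: "(if E (b 0) w then 1 else 0) + (if E (b 2) w then 1 else 0) \<le> (1::nat)"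
        by (rule cyc2[OF nt[OF e_b0_b2] nt[OF sym[OF e_b0_b2]]])
      have cyc2_8: "(if E (a 0) w then 1 else 0) + (if E c w then 1 else 0) + (if E (a 3) w then 1 else 0) + (if E y2 w then 1 else 0) + (if E z w then 1 else 0) \<le> (2::nat)"
        by (rule cyc5[OF nt[OF e_a0_c] nt[OF sym[OF e_a3_c]] nt[OF sym[OF e_y2_a3]] nt[OF sym[OF e_z_y2]] nt[OF e_z_a0]])
      have cyc2_9: "(if E (a 1) w then 1 else 0) + (if E (b 3) w then 1 else 0) + (if E (b 0) w then 1 else 0) + (if E (b 2) w then 1 else 0) + (if E y2 w then 1 else 0) \<le> (2::nat)"
        by (rule cyc5[OF nt[OF e_a1_b3] nt[OF e_b3_b0] nt[OF e_b0_b2] nt[OF sym[OF e_y2_b2]] nt[OF e_y2_a1]])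
      have cyc2_10: "(if E (a 3) w then 1 else 0) + (if E (b 1) w then 1 else 0) \<le> (1::nat)"
        by (rule cyc2[OF nt[OF e_a3_b1] nt[OF sym[OF e_a3_b1]]])
      have False by (rule fin2[OF wc[unfolded list.map sum_list.Cons sum_list.Nil] cyc2_0 cyc2_1 cyc2_2 cyc2_3 cyc2_4 cyc2_5 cyc2_6 cyc2_7 cyc2_8 cyc2_9 cyc2_10])
    }
    ultimately show False using cases by blast
  qed
qed

end
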